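(* Let $M\ge1$. If $\mathbf a\in\mathcal A_M$ and $\mathbf b\in\mathcal A_1$, then $\mathbf a\circ\mathbf b\in\mathcal A_M$.
   Context: Order and word operations. Sequences and words over $\{0,\dots,M\}$ are ordered lexicographically. Words are compared via $\mathbf c\prec\mathbf d$ iff $\mathbf c0^\infty\prec\mathbf d0^\infty$. For a word $c_1\dots c_k$: - if $c_k<M$, then $c_1\dots c_k^+=c_1\dots c_{k-1}(c_k+1)$; - if $c_k>0$, then $c_1\dots c_k^-=c_1\dots c_{k-1}(c_k-1)$; - the reflection is $\overline{c_1\dots c_k}=(M-c_1)\dots(M-c_k)$. Fundamental words. A word $a_1\dots a_m$ ($m\ge2$) over $\{0,\dots,M\}$ is fundamental if $\overline{a_1\dots a_{m-i}}\preceq a_{i+1}\dots a_m\prec a_1\dots a_{m-i}$ for all $1\le i<m$. When $M\ge2$, a one-letter word $a_1$ is fundamental if $M-a_1\le a_1<M$. $\mathcal A_M$ denotes the set of fundamental words over $\{0,\dots,M\}$, and $\mathcal A_1$ the set for $M=1$ (these all begin with $1$). The graph and labelings. For $\mathbf a\in\mathcal A_M$, let $G$ have vertices Start, $A$, $B$ and edges - $e_0$: Start$\to A$, - $e_1$: $A\to B$, - $e_2$: $B\to B$, - $e_3$: $B\to A$, - $e_4$: $A\to A$. Label them by - $\mathcal L_{\mathbf a}$: $e_0,e_3\mapsto\mathbf a^+$; $e_1\mapsto\overline{\mathbf a^+}$; $e_2\mapsto\mathbf a$; $e_4\mapsto\overline{\mathbf a}$; - $\mathcal L^*$: $e_0,e_3,e_4\mapsto1$;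 $e_1,e_2\mapsto0$. The map $\Phi_{\mathbf a}$. For a path $e_{i_1}\dots e_{i_k}$ with $i_1=0$, set $\Phi_{\mathbf a}(\mathcal L_{\mathbf a}(e_{i_1})\cdots\mathcal L_{\mathbf a}(e_{i_k}))=\mathcal L^*(e_{i_1}\dots e_{i_k})$. This gives a bijection between such block words and binary words beginning with $1$. Composition. For $\mathbf a\in\mathcal A_M$ and $\mathbf b\in\mathcal A_1$, the composition $\mathbf a\circ\mathbf b:=\Phi_{\mathbf a}^{-1}(\mathbf b)$ is the unique such block word (of length $|\mathbf a||\mathbf b|$) mapped to $\mathbf b$. *)

theory Defs
  imports Main
begin

text \<open>Words over the alphabet {0,...,M} are lists of naturals. Words are compared
  lexicographically after padding with 0 to infinite sequences.\<close>

definition pad :: "nat list \<Rightarrow> nat \<Rightarrow> nat" where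
  "pad c i = (if i < length c then c ! i else 0)"

definition word_less :: "nat list \<Rightarrow> nat list \<Rightarrow> bool" where
  "word_less c d \<longleftrightarrow> (\<exists>n. (\<forall>i<n. pad c i = pad d i) \<and> pad c n < pad d n)"

definition word_le :: "nat list \<Rightarrow> nat list \<Rightarrow> bool" where
  "word_le c d \<longleftrightarrow> word_less c d \<or> pad c = pad d"

definition word_refl :: "nat \<Rightarrow> nat list \<Rightarrow> nat list" where
  "word_refl M c = map (\<lambda>x. M - x) c"

text \<open>c^+ : increase the last letter by one (only used when the last letter is < M).\<close>
definition word_plus :: "nat list \<Rightarrow> nat list" where
  "word_plus c = butlast c @ [last c + 1]"

definition fundamental :: "nat \<Rightarrow> nat list \<Rightarrow> bool" where
  "fundamental M a \<longleftrightarrow>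
     a \<noteq> [] \<and> set a \<subseteq> {0..M} \<and>
     (if length a = 1 then 2 \<le> M \<and> M - a ! 0 \<le> a ! 0 \<and> a ! 0 < M
      else (\<forall>i. 1 \<le> i \<and> i < length a \<longrightarrow>
              word_le (word_refl M (take (length a - i) a)) (drop i a) \<and>
              word_less (drop i a) (take (length a - i) a)))"

datatype vertex = Start | VA | VB
datatype edge = E0 | E1 | E2 | E3 | E4

fun esrc :: "edge \<Rightarrow> vertex" where
  "esrc E0 = Start" | "esrc E1 = VA" | "esrc E2 = VB" | "esrc E3 = VB" | "esrc E4 = VA"

fun etgt :: "edge \<Rightarrow> vertex" where
  "etgt E0 = VA" | "etgt E1 = VB" | "etgt E2 = VB" | "etgt E3 = VA" | "etgt E4 = VA"

definition is_path :: "edge list \<Rightarrow> bool" where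
  "is_path p \<longleftrightarrow> p \<noteq> [] \<and> (\<forall>j. Suc j < length p \<longrightarrow> etgt (p ! j) = esrc (p ! Suc j))"

fun label_a :: "nat \<Rightarrow> nat list \<Rightarrow> edge \<Rightarrow> nat list" where
  "label_a M a E0 = word_plus a"
| "label_a M a E3 = word_plus a"
| "label_a M a E1 = word_refl M (word_plus a)"
| "label_a M a E2 = a"
| "label_a M a E4 = word_refl M a"

fun label_star :: "edge \<Rightarrow> nat" where
  "label_star E0 = 1" | "label_star E3 = 1" | "label_star E4 = 1"
| "label_star E1 = 0" | "label_star E2 = 0"

text \<open>Composition a \<circ> b = \<Phi>_a^{-1}(b): the block word L_a(p) of the path p starting with e0
  whose L^*-label is b.\<close>
definition compose :: "nat \<Rightarrow> nat list \<Rightarrow> nat list \<Rightarrow> nat list" where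
  "compose M a b = (THE w. \<exists>p. is_path p \<and> hd p = E0 \<and> map label_star p = b \<and>
                              w = concat (map (label_a M a) p))"

end

theory Submission
  imports Defs
begin

fun lless :: "nat list \<Rightarrow> nat list \<Rightarrow> bool" where
  "lless (x#xs) (y#ys) = (x < y \<or> (x = y \<and> lless xs ys))"
| "lless _ _ = False"

lemma pad_Cons0[simp]: "pad (x#xs) 0 = x" by (simp add: pad_def)
lemma pad_ConsS[simp]: "pad (x#xs) (Suc i) = pad xs i" by (simp add: pad_def)
lemma pad_Nil[simp]: "pad [] i = 0" by (simp add: pad_def)

lemma word_less_Cons: "word_less (x#xs) (y#ys) \<longleftrightarrow> x < y \<or> (x = y \<and> word_less xs ys)"
proof
  assume "word_less (x#xs) (y#ys)"
  then obtain n where n: "\<forall>i<n. pad (x#xs) i = pad (y#ys) i" "pad (x#xs) n < pad (y#ys) n"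
    unfolding word_less_def by blast
  show "x < y \<or> (x = y \<and> word_less xs ys)"
  proof (cases n)
    case 0 then show ?thesis using n by simp
  next
    case (Suc n') 
    have "x = y" using n(1) Suc by (metis pad_Cons0 zero_less_Suc)
    moreover have "word_less xs ys" unfolding word_less_def
      using n Suc by (intro exI[of _ n']) auto
    ultimately show ?thesis by simp
  qed
next
  assume "x < y \<or> (x = y \<and> word_less xs ys)"
  then show "word_less (x#xs) (y#ys)"
  proof
    assume "x < y" then show ?thesis unfolding word_less_def by (intro exI[of _ 0]) simp
  next
    assume h: "x = y \<and> word_less xs ys"
    then obtain n where n: "\<forall>i<n. pad xs i = pad ys i" "pad xs n < pad ys n"
      unfolding word_less_def by blast
    show ?thesis unfolding word_less_def
    proof (intro exI[of _ "Suc n"] conjI allI impI)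
      fix i assume "i < Suc n" then show "pad (x#xs) i = pad (y#ys) i"
        using h n by (cases i) auto
    qed (use n in simp)
  qed
qed

lemma lless_word_less: "length c = length d \<Longrightarrow> word_less c d = lless c d"
proof (induction c d rule: list_induct2)
  case Nil then show ?case by (simp add: word_less_def)
next
  case (Cons x xs y ys) then show ?case by (simp add: word_less_Cons)
qed

lemma pad_eq: "length c = length d \<Longrightarrow> (pad c = pad d) = (c = d)"
proof
  assume l: "length c = length d" and p: "pad c = pad d"
  show "c = d"
  proof (rule nth_equalityI)
    show "length c = length d" by fact
    fix i assume "i < length c"
    have "pad c i = pad d i" using p by simp
    then show "c ! i = d ! i" using l \<open>i < length c\<close> by (simp add: pad_def)
  qed
qed simp

lemma lle_word_le: "length c = length d \<Longrightarrow> word_le c d = (lless c d \<or> c = d)"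
  by (simp add: word_le_def lless_word_less pad_eq)

lemma lless_append: "length c1 = length d1 \<Longrightarrow>
   lless (c1@c2) (d1@d2) = (lless c1 d1 \<or> (c1 = d1 \<and> lless c2 d2))"
  by (induction c1 d1 rule: list_induct2) auto

lemma lless_irrefl[simp]: "\<not> lless x x"
  by (induction x) auto

lemma lless_trans: "lless x y \<Longrightarrow> lless y z \<Longrightarrow> lless x z"
proof (induction x arbitrary: y z)
  case Nil then show ?case by simp
next
  case (Cons a xs)
  then obtain b ys where y: "y = b#ys" by (cases y) auto
  with Cons obtain c zs where z: "z = c#zs" by (cases z) auto
  show ?case using Cons y z by auto
qed

lemma lless_le_trans: "lless x y \<Longrightarrow> lless y z \<or> y = z \<Longrightarrow> lless x z"
  using lless_trans by blast
lemma le_lless_trans: "lless x y \<or> x = y \<Longrightarrow> lless y z \<Longrightarrow> lless x z"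
  using lless_trans by blast

lemma lless_refl_anti: "length x = length y \<Longrightarrow> set x \<subseteq> {..M} \<Longrightarrow> set y \<subseteq> {..M} \<Longrightarrow>
   lless x y \<Longrightarrow> lless (word_refl M y) (word_refl M x)"
proof (induction x y rule: list_induct2)
  case Nil then show ?case by simp
next
  case (Cons a xs b ys) then show ?case by (auto simp: word_refl_def)
qed

lemma refl_refl: "set x \<subseteq> {..M} \<Longrightarrow> word_refl M (word_refl M x) = x"
  by (induction x) (auto simp: word_refl_def)

lemma refl_bound: "set (word_refl M x) \<subseteq> {..M}"
  by (auto simp: word_refl_def)

lemma refl_length[simp]: "length (word_refl M x) = length x"
  by (simp add: word_refl_def)

lemma lle_refl_anti: "set x \<subseteq> {..M} \<Longrightarrow> set y \<subseteq> {..M} \<Longrightarrow> length x = length y \<Longrightarrow>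
   lless x y \<or> x = y \<Longrightarrow> lless (word_refl M y) (word_refl M x) \<or> word_refl M y = word_refl M x"
  using lless_refl_anti by blast

lemma lle_refl_swap: "set x \<subseteq> {..M} \<Longrightarrow> set y \<subseteq> {..M} \<Longrightarrow> length x = length y \<Longrightarrow>
   lless (word_refl M x) y \<or> word_refl M x = y \<Longrightarrow> lless (word_refl M y) x \<or> word_refl M y = x"
  using lle_refl_anti[of "word_refl M x" M y] refl_refl[of x M] refl_bound[of M x] by auto

lemma wp_Cons: "xs \<noteq> [] \<Longrightarrow> word_plus (x#xs) = x # word_plus xs"
  by (simp add: word_plus_def)

lemma wp_length[simp]: "xs \<noteq> [] \<Longrightarrow> length (word_plus xs) = length xs"
  by (simp add: word_plus_def)

lemma lless_wp: "x \<noteq> [] \<Longrightarrow> lless x (word_plus x)"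
proof (induction x)
  case Nil then show ?case by simp
next
  case (Cons a xs) then show ?case
    by (cases "xs = []") (auto simp: wp_Cons word_plus_def)
qed

lemma lless_wp_le: "length x = length y \<Longrightarrow> x \<noteq> [] \<Longrightarrow> lless x y \<Longrightarrow>
   lless (word_plus x) y \<or> word_plus x = y"
proof (induction x y rule: list_induct2)
  case Nil then show ?case by simp
next
  case (Cons a xs b ys)
  show ?case
  proof (cases "xs = []")
    case True then show ?thesis using Cons by (auto simp: word_plus_def)
  next
    case False
    then have "ys \<noteq> []" using Cons by auto
    then show ?thesis using Cons False by (auto simp: wp_Cons)
  qed
qed

lemma drop_wp: "n < length x \<Longrightarrow> drop n (word_plus x) = word_plus (drop n x)"
  by (simp add: word_plus_def butlast_drop last_drop)

lemma take_wp: "n < length x \<Longrightarrow> take n (word_plus x) = take n x"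
  by (simp add: word_plus_def take_butlast)

lemma take_refl: "take n (word_refl M x) = word_refl M (take n x)"
  by (simp add: word_refl_def take_map)
lemma drop_refl: "drop n (word_refl M x) = word_refl M (drop n x)"
  by (simp add: word_refl_def drop_map)
lemma append_refl: "word_refl M (x @ y) = word_refl M x @ word_refl M y"
  by (simp add: word_refl_def)


definition blk :: "nat \<Rightarrow> nat list \<Rightarrow> nat \<Rightarrow> nat \<Rightarrow> nat list" where
  "blk M a x y = (if x = 0 then (if y = 0 then a else word_plus a)
                  else (if y = 0 then word_refl M (word_plus a) else word_refl M a))"

fun W :: "nat \<Rightarrow> nat list \<Rightarrow> nat list \<Rightarrow> nat list" where
  "W M a (x#y#rest) = blk M a x y @ W M a (y#rest)"
| "W M a _ = []"

locale fa =
  fixes M :: nat and a :: "nat list"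
  assumes fa: "fundamental M a"
begin

abbreviation "m \<equiv> length a"

lemma a_ne: "a \<noteq> []" using fa by (simp add: fundamental_def)
lemma a_set: "set a \<subseteq> {..M}" using fa by (auto simp: fundamental_def)

lemma a_shift:
  assumes "0 < r" "r < m"
  shows "lless (drop r a) (take (m - r) a)"
    "lless (word_refl M (take (m - r) a)) (drop r a) \<or> word_refl M (take (m - r) a) = drop r a"
proof -
  have "m \<noteq> 1" using assms by auto
  then have h: "word_le (word_refl M (take (m - r) a)) (drop r a) \<and> word_less (drop r a) (take (m - r) a)"
    using fa assms unfolding fundamental_def by auto
  show "lless (drop r a) (take (m - r) a)" using h assms by (simp add: lless_word_less)
  show "lless (word_refl M (take (m - r) a)) (drop r a) \<or> word_refl M (take (m - r) a) = drop r a"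
    using h assms by (simp add: lle_word_le)
qed

lemma a_first_last: "last a < M \<and> (lless (word_refl M a) a \<or> word_refl M a = a)"
proof (cases "m = 1")
  case True
  then obtain x where a: "a = [x]" by (cases a) auto
  then show ?thesis using fa by (auto simp: fundamental_def word_refl_def)
next
  case False
  then have m2: "m \<ge> 2" using a_ne \<open>m \<noteq> 1\<close> by (cases a) (auto simp: Suc_le_eq)
  have d: "drop (m - 1) a = [last a]" using a_ne
    by (metis One_nat_def append_butlast_last_id append_eq_conv_conj length_butlast)
  have t: "take (m - (m - 1)) a = [a ! 0]" using m2 by (cases a) auto
  have "lless [last a] [a ! 0]" using a_shift(1)[of "m - 1"] m2 d t by simp
  moreover have "lless (word_refl M [a ! 0]) [last a] \<or> word_refl M [a ! 0] = [last a]"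
    using a_shift(2)[of "m - 1"] m2 d t by simp
  moreover have "a ! 0 \<le> M" using a_set a_ne by (meson atMost_iff length_greater_0_conv nth_mem subsetD)
  moreover obtain y ys where "a = y # ys" using a_ne by (cases a) auto
  ultimately show ?thesis by (auto simp: word_refl_def)
qed

lemma a_last: "last a < M" using a_first_last by simp

lemma wpa_set: "set (word_plus a) \<subseteq> {..M}"
  using a_set a_last a_ne by (auto simp: word_plus_def dest: in_set_butlastD)

lemma wp_set_gen: "x \<noteq> [] \<Longrightarrow> set x \<subseteq> {..M} \<Longrightarrow> last x < M \<Longrightarrow> set (word_plus x) \<subseteq> {..M}"
  by (auto simp: word_plus_def dest: in_set_butlastD)

lemma blk_length[simp]: "length (blk M a x y) = m"
  using a_ne by (simp add: blk_def)

lemma blk_set: "set (blk M a x y) \<subseteq> {..M}"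
  using a_set wpa_set refl_bound by (simp add: blk_def)

lemma B1: "lless (blk M a 0 0) (blk M a 0 1)"
  using a_ne by (simp add: blk_def lless_wp)

lemma B2: "lless (blk M a 1 0) (blk M a 1 1)"
  using a_ne lless_refl_anti[of a "word_plus a" M] a_set wpa_set lless_wp[of a]
  by (simp add: blk_def)

lemma B3: "lless (blk M a 1 1) (blk M a 0 0) \<or> blk M a 1 1 = blk M a 0 0"
  using a_first_last by (simp add: blk_def)

lemma blk_cross: "lless (blk M a 1 x) (blk M a 0 y) \<or> (blk M a 1 x = blk M a 0 y \<and> x \<noteq> 0 \<and> y = 0)"
proof -
  have b: "blk M a 1 x = (if x = 0 then blk M a 1 0 else blk M a 1 1)"
    "blk M a 0 y = (if y = 0 then blk M a 0 0 else blk M a 0 1)" by (simp_all add: blk_def)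
  have c1: "lless (blk M a 1 0) (blk M a 0 0)" using B2 B3 lless_le_trans by blast
  have c2: "lless (blk M a 1 1) (blk M a 0 1)" using B1 B3 le_lless_trans by blast
  have c3: "lless (blk M a 1 0) (blk M a 0 1)" using c1 B1 lless_trans by blast
  show ?thesis unfolding b using c1 c2 c3 B3 by auto
qed

lemma blk_mono: "lless (blk M a x 0) (blk M a x 1)"
  using B1 B2 by (cases "x = 0") (simp_all add: blk_def)

lemma blk_norm: "blk M a x y = blk M a (if x = 0 then 0 else 1) (if y = 0 then 0 else 1)"
  by (simp add: blk_def)


lemma W_length: "length (W M a c) = (length c - 1) * m"
  by (induction c rule: induct_list012) auto

lemma W_set: "set (W M a c) \<subseteq> {..M}"
  using blk_set by (induction c rule: induct_list012) auto

lemma W_drop: "q < length c \<Longrightarrow> drop (q * m) (W M a c) = W M a (drop q c)"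
proof (induction q arbitrary: c)
  case 0 then show ?case by simp
next
  case (Suc q)
  then obtain x y rest where c: "c = x # y # rest" by (cases c; cases "tl c") auto
  show ?case using Suc.IH[of "y#rest"] Suc.prems c by simp
qed

lemma W_take: "q < length c \<Longrightarrow> take (q * m) (W M a c) = W M a (take (Suc q) c)"
proof (induction q arbitrary: c)
  case 0 then show ?case by (cases c) auto
next
  case (Suc q)
  then obtain x y rest where c: "c = x # y # rest" by (cases c; cases "tl c") auto
  show ?case using Suc.IH[of "y#rest"] Suc.prems c by simp
qed

lemma blk_refl: "word_refl M (blk M a x y) = blk M a (1 - x) (1 - y)"
  using refl_refl[OF a_set] refl_refl[OF wpa_set] by (simp add: blk_def)

lemma W_refl: "word_refl M (W M a c) = W M a (map (\<lambda>x. 1 - x) c)"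
proof (induction c rule: induct_list012)
  case (3 x y zs) then show ?case by (simp add: append_refl blk_refl)
qed (auto simp: word_refl_def)

lemma W_mono: "length x = length y \<Longrightarrow> set y \<subseteq> {0,1} \<Longrightarrow> lless x y \<Longrightarrow> lless (W M a (z#x)) (W M a (z#y))"
proof (induction x y arbitrary: z rule: list_induct2)
  case Nil then show ?case by simp
next
  case (Cons x1 xs y1 ys)
  show ?case
  proof (cases "x1 = y1")
    case True
    then have "lless xs ys" using Cons by simp
    then show ?thesis using Cons.IH[of y1] Cons.prems True by (simp add: lless_append)
  next
    case False
    then have "x1 < y1" using Cons by simp
    then have "x1 = 0" "y1 = 1" using Cons.prems by auto
    then have "lless (blk M a z x1) (blk M a z y1)"
      using blk_mono[of z] blk_norm[of z x1] blk_norm[of z y1] by auto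
    then show ?thesis by (simp add: lless_append)
  qed
qed

lemma W_mono_le: "length x = length y \<Longrightarrow> set y \<subseteq> {0,1} \<Longrightarrow> lless x y \<or> x = y \<Longrightarrow>
   lless (W M a (z#x)) (W M a (z#y)) \<or> W M a (z#x) = W M a (z#y)"
  using W_mono by blast

lemma W_cross: "length x = length y \<Longrightarrow> u \<noteq> 0 \<Longrightarrow>
   (lless (W M a (u#x)) (W M a (0#y)) \<or> W M a (u#x) = W M a (0#y)) \<and>
   (0 \<in> set x \<longrightarrow> lless (W M a (u#x)) (W M a (0#y)))"
proof (induction x y arbitrary: u rule: list_induct2)
  case Nil then show ?case by simp
next
  case (Cons x1 xs y1 ys)
  have bu: "blk M a u x1 = blk M a 1 x1" using Cons.prems blk_norm[of u x1] blk_norm[of 1 x1] by simp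
  show ?case
    using blk_cross[of x1 y1]
  proof
    assume "lless (blk M a 1 x1) (blk M a 0 y1)"
    then show ?thesis using bu by (simp add: lless_append)
  next
    assume h: "blk M a 1 x1 = blk M a 0 y1 \<and> x1 \<noteq> 0 \<and> y1 = 0"
    then show ?thesis using Cons.IH[of x1] bu by (auto simp: lless_append)
  qed
qed

lemma NU1:
  assumes "0 < r" "r < m"
  shows "lless (drop r (blk M a x y)) (take (m - r) a) \<or>
         (drop r (blk M a x y) = take (m - r) a \<and> y \<noteq> 0)"
proof -
  let ?u = "drop r a" and ?p = "take (m - r) a"
  have up: "lless ?u ?p" and pu: "lless (word_refl M ?p) ?u \<or> word_refl M ?p = ?u"
    using a_shift assms by auto
  have len: "length ?u = length ?p" using assms by simp
  have une: "?u \<noteq> []" using assms by simp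
  have us: "set ?u \<subseteq> {..M}" and ps: "set ?p \<subseteq> {..M}" using a_set
    by (auto dest: in_set_dropD in_set_takeD)
  have ul: "last ?u < M" using a_last assms by (simp add: last_drop)
  have wus: "set (word_plus ?u) \<subseteq> {..M}" using wp_set_gen[OF une us ul] .
  have up2: "lless (word_plus ?u) ?p \<or> word_plus ?u = ?p" using lless_wp_le[OF len une up] .
  have rup: "lless (word_refl M ?u) ?p \<or> word_refl M ?u = ?p"
    using lle_refl_swap[OF ps us len[symmetric] pu] .
  have r2: "lless (word_refl M (word_plus ?u)) (word_refl M ?u)"
    using lless_refl_anti[of ?u "word_plus ?u" M] une us wus lless_wp[OF une] by simp
  have dr: "drop r (word_plus a) = word_plus ?u" using drop_wp assms by simp
  show ?thesis
  proof (cases "x = 0")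
    case True
    then show ?thesis using up up2 dr by (cases "y = 0") (auto simp: blk_def)
  next
    case False
    then show ?thesis using rup r2 dr lless_le_trans[OF r2 rup]
      by (cases "y = 0") (auto simp: blk_def drop_refl)
  qed
qed

lemma NU2:
  assumes "0 < r" "r < m" "z \<noteq> 0"
  shows "lless (take r (blk M a z y)) (drop (m - r) (word_plus a))"
proof -
  let ?v = "drop (m - r) a" and ?t = "take r a"
  have h: "lless (word_refl M ?t) ?v \<or> word_refl M ?t = ?v"
    using a_shift(2)[of "m - r"] assms by simp
  have vne: "?v \<noteq> []" using assms by simp
  have "lless (word_refl M ?t) (word_plus ?v)"
    using le_lless_trans[OF h lless_wp[OF vne]] .
  moreover have "take r (blk M a z y) = word_refl M ?t"
    using assms take_wp[of r a] by (simp add: blk_def take_refl)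
  moreover have "drop (m - r) (word_plus a) = word_plus ?v" using drop_wp assms by simp
  ultimately show ?thesis by simp
qed

lemma NL1:
  assumes "0 < r" "r < m"
  shows "lless (word_refl M (take (m - r) a)) (drop r (blk M a x y)) \<or>
         (word_refl M (take (m - r) a) = drop r (blk M a x y) \<and> y = 0)"
proof -
  let ?u = "drop r a" and ?p = "take (m - r) a"
  have up: "lless ?u ?p" and pu: "lless (word_refl M ?p) ?u \<or> word_refl M ?p = ?u"
    using a_shift assms by auto
  have len: "length ?u = length ?p" using assms by simp
  have une: "?u \<noteq> []" using assms by simp
  have us: "set ?u \<subseteq> {..M}" and ps: "set ?p \<subseteq> {..M}" using a_set
    by (auto dest: in_set_dropD in_set_takeD)
  have ul: "last ?u < M" using a_last assms by (simp add: last_drop)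
  have wus: "set (word_plus ?u) \<subseteq> {..M}" using wp_set_gen[OF une us ul] .
  have up2: "lless (word_plus ?u) ?p \<or> word_plus ?u = ?p" using lless_wp_le[OF len une up] .
  have r1: "lless (word_refl M ?p) (word_refl M ?u)"
    using lless_refl_anti[OF len us ps up] .
  have r3: "lless (word_refl M ?p) (word_refl M (word_plus ?u)) \<or> word_refl M ?p = word_refl M (word_plus ?u)"
    using lle_refl_anti[of "word_plus ?u" M ?p] wus ps len une up2 by simp
  have dr: "drop r (word_plus a) = word_plus ?u" using drop_wp assms by simp
  show ?thesis
  proof (cases "x = 0")
    case True
    then show ?thesis using pu dr le_lless_trans[OF pu lless_wp[OF une]]
      by (cases "y = 0") (auto simp: blk_def)
  next
    case False
    then show ?thesis using r1 r3 dr
      by (cases "y = 0") (auto simp: blk_def drop_refl)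
  qed
qed

lemma NL2:
  assumes "0 < r" "r < m" "z = 0"
  shows "lless (word_refl M (drop (m - r) (word_plus a))) (take r (blk M a z y))"
proof -
  let ?v = "drop (m - r) a" and ?t = "take r a"
  have h: "lless (word_refl M ?t) ?v \<or> word_refl M ?t = ?v"
    using a_shift(2)[of "m - r"] assms by simp
  have vne: "?v \<noteq> []" using assms by simp
  have vs: "set ?v \<subseteq> {..M}" and ts: "set ?t \<subseteq> {..M}" using a_set
    by (auto dest: in_set_dropD in_set_takeD)
  have vl: "last ?v < M" using a_last assms by (simp add: last_drop)
  have wvs: "set (word_plus ?v) \<subseteq> {..M}" using wp_set_gen[OF vne vs vl] .
  have h2: "lless (word_refl M ?v) ?t \<or> word_refl M ?v = ?t"
    using lle_refl_swap[OF ts vs _ h] assms by simp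
  have r2: "lless (word_refl M (word_plus ?v)) (word_refl M ?v)"
    using lless_refl_anti[of ?v "word_plus ?v" M] vne vs wvs lless_wp[OF vne] by simp
  have "lless (word_refl M (word_plus ?v)) ?t" using lless_le_trans[OF r2 h2] .
  moreover have "take r (blk M a z y) = ?t"
    using assms take_wp[of r a] by (simp add: blk_def)
  moreover have "drop (m - r) (word_plus a) = word_plus ?v" using drop_wp assms by simp
  ultimately show ?thesis by simp
qed


lemma lless3: "length D1 = length T1 \<Longrightarrow> length D2 = length T2 \<Longrightarrow>
   lless D1 T1 \<or> (D1 = T1 \<and> lless D2 T2) \<Longrightarrow> lless (D1 @ D2 @ D3) (T1 @ T2 @ T3)"
  by (auto simp: lless_append)

lemma main:
  assumes fb: "fundamental 1 b"
  shows "fundamental M (W M a (0 # b))"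
proof -
  interpret bb: fa 1 b using fb by unfold_locales
  define k where "k = length b"
  define c where "c = 0 # b"
  define w where "w = W M a c"
  define n where "n = length w"
  have bne: "b \<noteq> []" using bb.a_ne .
  have bbits: "set b \<subseteq> {0,1}" using bb.a_set by auto
  have bl: "last b = 0" using bb.a_last by simp
  have k1: "k \<noteq> 1" using fb by (auto simp: fundamental_def k_def)
  then have k2: "k \<ge> 2" using bne k_def by (cases b) (auto simp: Suc_le_eq)
  have b0: "b ! 0 = 1"
  proof -
    have d: "drop (k - 1) b = [last b]" using bne k_def
      by (metis One_nat_def append_butlast_last_id append_eq_conv_conj length_butlast)
    have t: "take (k - (k - 1)) b = [b ! 0]" using k2 k_def by (cases b) auto
    have "lless [last b] [b ! 0]" using bb.a_shift(1)[of "k - 1"] k2 d t k_def by simp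
    moreover have "b ! 0 \<in> {0,1}" using bbits bne by (meson length_greater_0_conv nth_mem subsetD)
    ultimately show ?thesis using bl by auto
  qed
  have m1: "m \<ge> 1" using a_ne by (cases a) auto
  have nkm: "n = k * m" unfolding n_def w_def c_def k_def by (simp add: W_length)
  have wsplit: "w = word_plus a @ W M a b"
  proof -
    obtain b1 bt where "b = b1 # bt" using bne by (cases b) auto
    then show ?thesis using b0 by (simp add: w_def c_def blk_def)
  qed
  have refl1: "\<And>x. word_refl 1 x = map (\<lambda>x. 1 - x) x" by (simp add: word_refl_def)
  have shift: "\<forall>i. 1 \<le> i \<and> i < n \<longrightarrow>
      word_le (word_refl M (take (n - i) w)) (drop i w) \<and> word_less (drop i w) (take (n - i) w)"
  proof (intro allI impI)
    fix i assume i: "1 \<le> i \<and> i < n"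
    define q where "q = i div m"
    define r where "r = i mod m"
    have iqr: "i = q * m + r" unfolding q_def r_def by simp
    have rm: "r < m" unfolding r_def using a_ne by (intro mod_less_divisor) simp
    have qk: "q < k"
    proof (rule ccontr)
      assume "\<not> q < k" then have "k * m \<le> q * m" by simp
      then show False using i iqr nkm by linarith
    qed
    have nq: "n = q * m + (k - q) * m" using qk nkm by (simp add: add_mult_distrib[symmetric])
    have lenD: "length (drop i w) = n - i" using n_def by simp
    have lenT: "length (take (n - i) w) = n - i" using n_def by simp
    have goal: "(lless (word_refl M (take (n - i) w)) (drop i w) \<or> word_refl M (take (n - i) w) = drop i w)
           \<and> lless (drop i w) (take (n - i) w)"
    proof (cases "r = 0")
      case True
      then have q1: "q \<ge> 1" using i iqr by (cases q) auto
      then obtain q' where q': "q = Suc q'" by (cases q) auto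
      have D: "drop i w = W M a (b ! q' # drop q b)"
        using iqr True W_drop[of q c] qk q' k_def Cons_nth_drop_Suc[of q' b]
        by (simp add: w_def c_def)
      have nmi: "n - i = (k - q) * m" using nq iqr True by simp
      have T: "take (n - i) w = W M a (0 # take (k - q) b)"
        using nmi W_take[of "k - q" c] qk k_def by (simp add: w_def c_def)
      have RT: "word_refl M (take (n - i) w) = W M a (1 # map (\<lambda>x. 1 - x) (take (k - q) b))"
        using T W_refl by simp
      have bs1: "lless (drop q b) (take (k - q) b)" using bb.a_shift(1)[of q] q1 qk k_def by simp
      have bs2: "lless (map (\<lambda>x. 1 - x) (take (k - q) b)) (drop q b) \<or> map (\<lambda>x. 1 - x) (take (k - q) b) = drop q b"
        using bb.a_shift(2)[of q] q1 qk k_def refl1 by simp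
      have len1: "length (drop q b) = length (take (k - q) b)" using k_def qk by simp
      have len2: "length (map (\<lambda>x. 1 - x) (take (k - q) b)) = length (drop q b)" using k_def qk by simp
      have bit1: "set (drop q b) \<subseteq> {0,1}" "set (take (k - q) b) \<subseteq> {0,1}"
        using bbits by (auto dest: in_set_dropD in_set_takeD)
      have z: "0 \<in> set (drop q b)"
      proof -
        have "drop q b \<noteq> []" using qk k_def by simp
        then have "last (drop q b) \<in> set (drop q b)" by (rule last_in_set)
        then show ?thesis using bl qk k_def by (simp add: last_drop)
      qed
      have bq: "b ! q' \<in> {0,1}" using bbits qk q' k_def by (meson Suc_lessD nth_mem subsetD)
      show ?thesis
      proof (cases "b ! q' = 0")
        case True
        have U: "lless (drop i w) (take (n - i) w)"
          using D T True W_mono[OF len1 bit1(2) bs1, of 0] by simp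
        have L: "lless (word_refl M (take (n - i) w)) (drop i w) \<or> word_refl M (take (n - i) w) = drop i w"
          using D RT True W_cross[OF len2, of 1] by simp
        show ?thesis using U L by simp
      next
        case False
        then have b1: "b ! q' = 1" using bq by simp
        have U: "lless (drop i w) (take (n - i) w)"
          using D T b1 W_cross[OF len1, of 1] z by simp
        have L: "lless (word_refl M (take (n - i) w)) (drop i w) \<or> word_refl M (take (n - i) w) = drop i w"
          using D RT b1 W_mono_le[OF len2 bit1(1) bs2, of 1] by simp
        show ?thesis using U L by simp
      qed
    next
      case False
      then have r0: "0 < r" by simp
      define x where "x = c ! q"
      define y where "y = b ! q"
      have cq: "drop q c = x # y # drop (Suc (Suc q)) c"
        using Cons_nth_drop_Suc[of q c] Cons_nth_drop_Suc[of "Suc q" c] qk k_def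
        by (simp add: x_def y_def c_def)
      have D0: "drop i w = drop r (blk M a x y) @ W M a (y # drop (Suc (Suc q)) c)"
      proof -
        have "drop i w = drop r (drop (q * m) w)" using iqr by (simp add: add.commute)
        also have "drop (q * m) w = W M a (drop q c)" using W_drop[of q c] qk k_def
          by (simp add: w_def c_def)
        finally show ?thesis using cq rm by simp
      qed
      show ?thesis
      proof (cases "Suc q = k")
        case True
        have qq: "q = length b - 1" using True k_def by simp
        have yb: "y = 0" using qq bl bne by (simp add: y_def last_conv_nth)
        have dc: "drop (Suc (Suc q)) c = []" using True k_def by (simp add: c_def)
        have D: "drop i w = drop r (blk M a x y)" using D0 dc by simp
        have "k - q = 1" using True by simp
        then have nmi: "n - i = m - r" using nq iqr by simp
        have T: "take (n - i) w = take (m - r) a"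
          using nmi wsplit take_wp[of "m - r" a] r0 rm a_ne by simp
        have U: "lless (drop i w) (take (n - i) w)"
          using NU1[OF r0 rm, of x y] D T yb by auto
        have L: "lless (word_refl M (take (n - i) w)) (drop i w) \<or> word_refl M (take (n - i) w) = drop i w"
          using NL1[OF r0 rm, of x y] D T by auto
        show ?thesis using U L by simp
      next
        case False
        then have q2: "Suc (Suc q) < length c" using qk k_def by (simp add: c_def)
        define y' where "y' = c ! Suc (Suc q)"
        have dc: "drop (Suc (Suc q)) c = y' # drop (Suc (Suc (Suc q))) c"
          using Cons_nth_drop_Suc[OF q2] by (simp add: y'_def)
        define D3 where "D3 = drop r (blk M a y y') @ W M a (y' # drop (Suc (Suc (Suc q))) c)"
        have D: "drop i w = drop r (blk M a x y) @ take r (blk M a y y') @ D3"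
          using D0 dc unfolding D3_def by simp
        have nmi: "n - i \<ge> m" using nq iqr False qk rm
        proof -
          have "(k - q) * m \<ge> 2 * m" using False qk by (intro mult_right_mono) auto
          then show ?thesis using nq iqr rm by linarith
        qed
        define T3 where "T3 = take (n - i - m) (W M a b)"
        have wpl: "length (word_plus a) = m" using a_ne by simp
        have T: "take (n - i) w = take (m - r) a @ drop (m - r) (word_plus a) @ T3"
        proof -
          have "take (n - i) w = word_plus a @ T3" using wsplit nmi wpl by (simp add: T3_def)
          also have "word_plus a = take (m - r) (word_plus a) @ drop (m - r) (word_plus a)" by simp
          also have "take (m - r) (word_plus a) = take (m - r) a" using take_wp r0 rm by simp
          finally show ?thesis by simp
        qed
        have l1: "length (drop r (blk M a x y)) = length (take (m - r) a)" using rm by simp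
        have l2: "length (take r (blk M a y y')) = length (drop (m - r) (word_plus a))"
          using rm wpl by simp
        have U: "lless (drop i w) (take (n - i) w)"
          unfolding D T
        proof (rule lless3[OF l1 l2])
          show "lless (drop r (blk M a x y)) (take (m - r) a) \<or>
              drop r (blk M a x y) = take (m - r) a \<and> lless (take r (blk M a y y')) (drop (m - r) (word_plus a))"
            using NU1[OF r0 rm, of x y] NU2[OF r0 rm, of y y'] by auto
        qed
        have L: "lless (word_refl M (take (n - i) w)) (drop i w)"
          unfolding D T append_refl
        proof (rule lless3)
          show "lless (word_refl M (take (m - r) a)) (drop r (blk M a x y)) \<or>
              word_refl M (take (m - r) a) = drop r (blk M a x y) \<and>
              lless (word_refl M (drop (m - r) (word_plus a))) (take r (blk M a y y'))"
            using NL1[OF r0 rm, of x y] NL2[OF r0 rm, of y y'] by auto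
        qed (use l1 l2 in simp_all)
        show ?thesis using U L by simp
      qed
    qed
    show "word_le (word_refl M (take (n - i) w)) (drop i w) \<and> word_less (drop i w) (take (n - i) w)"
      using goal lenD lenT by (simp add: lle_word_le lless_word_less)
  qed
  have wne: "w \<noteq> []" using nkm k2 m1 n_def by (cases w) auto
  have n1: "n \<noteq> 1" using nkm k2 m1
    by (metis One_nat_def le_add_diff_inverse2 mult_eq_1_iff not_numeral_le_zero numeral_le_one_iff semiring_norm(69) zero_le_numeral)
  have ws: "set w \<subseteq> {0..M}" using W_set[of c] unfolding w_def by auto
  show ?thesis using wne n1 ws shift unfolding fundamental_def w_def c_def n_def by simp
qed

end


fun vbit :: "vertex \<Rightarrow> nat" where
  "vbit VA = 1" | "vbit VB = 0" | "vbit Start = 0"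

lemma label_blk: "label_a M a e = blk M a (vbit (esrc e)) (label_star e)"
  by (cases e) (simp_all add: blk_def)

lemma star_tgt: "label_star e = vbit (etgt e)"
  by (cases e) simp_all

lemma is_path_Cons: "is_path (e # p) \<longleftrightarrow> (p = [] \<or> (etgt e = esrc (hd p) \<and> is_path p))"
proof
  assume h: "is_path (e # p)"
  show "p = [] \<or> (etgt e = esrc (hd p) \<and> is_path p)"
  proof (cases p)
    case Nil then show ?thesis by simp
  next
    case (Cons e' p')
    have "etgt e = esrc (hd p)" using h Cons unfolding is_path_def by force
    moreover have "is_path p" unfolding is_path_def
    proof (intro conjI allI impI)
      show "p \<noteq> []" using Cons by simp
      fix j assume "Suc j < length p"
      then show "etgt (p ! j) = esrc (p ! Suc j)"
        using h unfolding is_path_def by (metis Suc_less_eq length_Cons nth_Cons_Suc)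
    qed
    ultimately show ?thesis by simp
  qed
next
  assume h: "p = [] \<or> (etgt e = esrc (hd p) \<and> is_path p)"
  show "is_path (e # p)" unfolding is_path_def
  proof (intro conjI allI impI)
    fix j assume j: "Suc j < length (e # p)"
    show "etgt ((e # p) ! j) = esrc ((e # p) ! Suc j)"
    proof (cases j)
      case 0 then show ?thesis using h j by (cases p) auto
    next
      case (Suc j') then show ?thesis using h j unfolding is_path_def by auto
    qed
  qed simp
qed

lemma path_W: "is_path p \<Longrightarrow> concat (map (label_a M a) p) = W M a (vbit (esrc (hd p)) # map label_star p)"
proof (induction p)
  case Nil then show ?case by (simp add: is_path_def)
next
  case (Cons e p)
  show ?case
  proof (cases p)
    case Nil then show ?thesis by (simp add: label_blk)
  next
    case (Cons e' p')
    then have "etgt e = esrc e'" "is_path p" using Cons.prems is_path_Cons by auto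
    then show ?thesis using Cons.IH Cons by (simp add: label_blk star_tgt)
  qed
qed

fun nxt :: "vertex \<Rightarrow> nat \<Rightarrow> edge" where
  "nxt VA y = (if y = 0 then E1 else E4)"
| "nxt VB y = (if y = 0 then E2 else E3)"
| "nxt Start y = E0"

fun mkp :: "vertex \<Rightarrow> nat list \<Rightarrow> edge list" where
  "mkp v [] = []"
| "mkp v (y # ys) = nxt v y # mkp (etgt (nxt v y)) ys"

lemma nxt_src: "esrc (nxt v y) = v"
  by (cases v) auto

lemma mkp_path: "ys \<noteq> [] \<Longrightarrow> is_path (mkp v ys) \<and> esrc (hd (mkp v ys)) = v"
proof (induction ys arbitrary: v)
  case Nil then show ?case by simp
next
  case (Cons y ys)
  show ?case
  proof (cases ys)
    case Nil then show ?thesis by (simp add: is_path_def nxt_src)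
  next
    case (Cons y' ys')
    then show ?thesis using Cons.IH[of "etgt (nxt v y)"] by (simp add: is_path_Cons nxt_src)
  qed
qed

lemma mkp_label: "set ys \<subseteq> {0,1} \<Longrightarrow> v \<noteq> Start \<Longrightarrow> map label_star (mkp v ys) = ys"
proof (induction ys arbitrary: v)
  case (Cons y ys)
  have "etgt (nxt v y) \<noteq> Start" by (cases v) auto
  then show ?case using Cons by (cases v) auto
qed simp

lemma compose_W:
  assumes "set b \<subseteq> {0,1}" "b \<noteq> []" "hd b = 1"
  shows "compose M a b = W M a (0 # b)"
  unfolding compose_def
proof (rule the_equality)
  obtain y ys where b: "b = y # ys" using assms by (cases b) auto
  let ?p = "mkp Start b"
  have pp: "is_path ?p" using mkp_path assms(2) by blast
  have hd: "hd ?p = E0" using b by simp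
  have lab: "map label_star ?p = b"
    using b assms mkp_label[of ys "etgt E0"] by simp
  show "\<exists>p. is_path p \<and> hd p = E0 \<and> map label_star p = b \<and> W M a (0 # b) = concat (map (label_a M a) p)"
    using pp hd lab path_W[OF pp] by (intro exI[of _ ?p]) simp
next
  fix w assume "\<exists>p. is_path p \<and> hd p = E0 \<and> map label_star p = b \<and> w = concat (map (label_a M a) p)"
  then obtain p where "is_path p" "hd p = E0" "map label_star p = b" "w = concat (map (label_a M a) p)"
    by blast
  then show "w = W M a (0 # b)" using path_W by simp
qed

theorem lemma2p9:
  fixes M :: nat and a b :: "nat list"
  assumes "M \<ge> 1" and "fundamental M a" and "fundamental 1 b"
  shows "fundamental M (compose M a b)"
proof -
  interpret fa M a using assms(2) by unfold_locales
  interpret bb: fa 1 b using assms(3) by unfold_locales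
  have bs: "set b \<subseteq> {0,1}" using bb.a_set by auto
  have bne: "b \<noteq> []" using bb.a_ne .
  have "length b \<ge> 2" using assms(3) bne by (cases b) (auto simp: fundamental_def Suc_le_eq)
  have "hd b = 1"
  proof -
    let ?k = "length b"
    have k2: "?k \<ge> 2" using assms(3) bne by (cases b) (auto simp: fundamental_def Suc_le_eq)
    have d: "drop (?k - 1) b = [last b]" using bne
      by (metis One_nat_def append_butlast_last_id append_eq_conv_conj length_butlast)
    have t: "take (?k - (?k - 1)) b = [b ! 0]" using k2 by (cases b) auto
    have "lless [last b] [b ! 0]" using bb.a_shift(1)[of "?k - 1"] k2 d t by simp
    moreover have "b ! 0 \<in> {0,1}" using bs bne by (meson length_greater_0_conv nth_mem subsetD)
    ultimately show ?thesis using bne by (cases b) auto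
  qed
  then show ?thesis using compose_W[OF bs bne] main[OF assms(3)] by simp
qed

end
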